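(* Let $\Phi:\mathcal G^m_{[n]}\to(\mathbb R^m)^n$ be a vector-valued Shapley operator. Then for every $k\in[m]$ and every $i\in[n]$, the $k$-th coordinate $\pi_k(\Phi_i(v))$ depends only on the scalar game $\pi_k\circ v$. Equivalently, there exists a scalar value operator $\phi=(\phi_1,\dots,\phi_n):\mathcal G_{[n]}\to\mathbb R^n$ (the same for all $k$) such that for all $v\in\mathcal G^m_{[n]}$ and all $i\in[n]$, $$\Phi_i(v)=\big(\phi_i(\pi_1\circ v),\dots,\phi_i(\pi_m\circ v)\big).$$
   Context: Let $n,m\in\mathbb N$, $[n]=\{1,\dots,n\}$ and $\mathcal P([n])$ its power set. Let $\mathcal G_{[n]}=\{v:\mathcal P([n])\to\mathbb R:\ v(\varnothing)=0\}$ and $\mathcal G^m_{[n]}=\{v:\mathcal P([n])\to\mathbb R^m:\ v(\varnothing)=0\}$, real vector spaces under pointwise operations (elements are called games). For $k\in[m]$, $\pi_k:\mathbb R^m\to\mathbb R$ denotes the $k$-th coordinate projection. A scalar value operator is a map $\mathcal G_{[n]}\to\mathbb R^n$. A vector-valued value operator is a map $\Phi:\mathcal G^m_{[n]}\to(\mathbb R^m)^n$, $v\mapsto(\Phi_1(v),\dots,\Phi_n(v))$. It is called a vector-valued Shapley operator if, for all games (equalities in $\mathbb R^m$): (i) Efficiency: $\sum_{i=1}^n\Phi_i(v)=v([n])$; (ii) Symmetry: if $i\neq j$ and $v(S\cup\{i\})=v(S\cup\{j\})$ for all $S\subseteq[n]\setminus\{i,j\}$, then $\Phi_i(v)=\Phi_j(v)$;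 (iii) Dummy: if $v(S\cup\{i\})=v(S)$ for all $S\subseteq[n]\setminus\{i\}$, then $\Phi_i(v)=0$; (iv) Additivity: $\Phi(\alpha v+\beta w)=\alpha\Phi(v)+\beta\Phi(w)$ for all $v,w\in\mathcal G^m_{[n]}$, $\alpha,\beta\in\mathbb R$. For $m=1$ these are the scalar Shapley axioms for a scalar value operator. *)

theory Defs
  imports "HOL-Analysis.Analysis"
begin

(* Players: the finite type 'n (playing the role of [n]); coordinates: the finite type 'm
   (playing the role of [m]); R^m is real^'m and pi_k x = x $ k. *)

definition vgames :: "('n::finite set \<Rightarrow> real^'m) set" where
  "vgames = {v. v {} = 0}"

definition vector_shapley_operator ::
  "(('n::finite set \<Rightarrow> real^'m::finite) \<Rightarrow> 'n \<Rightarrow> real^'m) \<Rightarrow> bool" where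
  "vector_shapley_operator \<Phi> \<longleftrightarrow>
     (\<forall>v\<in>vgames. (\<Sum>i\<in>UNIV. \<Phi> v i) = v UNIV) \<and>
     (\<forall>v\<in>vgames. \<forall>i j. i \<noteq> j \<longrightarrow>
        (\<forall>S. S \<subseteq> UNIV - {i, j} \<longrightarrow> v (insert i S) = v (insert j S)) \<longrightarrow>
        \<Phi> v i = \<Phi> v j) \<and>
     (\<forall>v\<in>vgames. \<forall>i.
        (\<forall>S. S \<subseteq> UNIV - {i} \<longrightarrow> v (insert i S) = v S) \<longrightarrow> \<Phi> v i = 0) \<and>
     (\<forall>v\<in>vgames. \<forall>w\<in>vgames. \<forall>\<alpha> \<beta> :: real.
        \<Phi> (\<lambda>S. \<alpha> *\<^sub>R v S + \<beta> *\<^sub>R w S) = (\<lambda>i. \<alpha> *\<^sub>R \<Phi> v i + \<beta> *\<^sub>R \<Phi> w i))"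

end

theory Submission
  imports Defs
begin

lemma zero_operator:
  fixes \<rho> :: "('n::finite set \<Rightarrow> real^'m::finite) \<Rightarrow> 'n \<Rightarrow> real"
  assumes lin: "\<And>v w \<alpha> \<beta>. v \<in> vgames \<Longrightarrow> w \<in> vgames \<Longrightarrow>
       \<rho> (\<lambda>S. \<alpha> *\<^sub>R v S + \<beta> *\<^sub>R w S) = (\<lambda>i. \<alpha> * \<rho> v i + \<beta> * \<rho> w i)"
  and sym: "\<And>v i j. v \<in> vgames \<Longrightarrow> i \<noteq> j \<Longrightarrow>
        (\<forall>S. S \<subseteq> UNIV - {i, j} \<longrightarrow> v (insert i S) = v (insert j S)) \<Longrightarrow> \<rho> v i = \<rho> v j"
  and dum: "\<And>v i. v \<in> vgames \<Longrightarrow>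
        (\<forall>S. S \<subseteq> UNIV - {i} \<longrightarrow> v (insert i S) = v S) \<Longrightarrow> \<rho> v i = 0"
  and eff: "\<And>v. v \<in> vgames \<Longrightarrow> (\<Sum>i\<in>UNIV. \<rho> v i) = 0"
  shows "v \<in> vgames \<Longrightarrow> \<rho> v i = 0"
proof (induction "card {S. \<exists>R\<subseteq>S. v R \<noteq> 0}" arbitrary: v i rule: less_induct)
  case less
  have v0: "v {} = 0" using less.prems by (simp add: vgames_def)
  show ?case
  proof (cases "\<forall>S. v S = 0")
    case True
    have "v = (\<lambda>S. 0 *\<^sub>R v S + 0 *\<^sub>R v S)" using True by auto
    then have "\<rho> v = (\<lambda>i. 0 * \<rho> v i + 0 * \<rho> v i)" using lin[OF less.prems less.prems, of 0 0] by metis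
    then show ?thesis by (metis add.right_neutral mult_zero_left)
  next
    case False
    then obtain S0 where "v S0 \<noteq> 0" by auto
    then obtain T where vT: "v T \<noteq> 0" and minT: "\<And>R. v R \<noteq> 0 \<Longrightarrow> card T \<le> card R"
      using ex_has_least_nat[of "\<lambda>S. v S \<noteq> 0" S0 card] by blast
    have minT': "v R = 0" if "R \<subset> T" for R
      using minT[of R] psubset_card_mono[OF _ that] by force
    have Tne: "T \<noteq> {}" using vT v0 by auto
    define u where "u = (\<lambda>S. if T \<subseteq> S then v T else 0)"
    have u: "u \<in> vgames" using Tne by (auto simp: u_def vgames_def)
    define v' where "v' = (\<lambda>S. 1 *\<^sub>R v S + (-1) *\<^sub>R u S)"
    have v': "v' \<in> vgames" using u less.prems by (auto simp: v'_def vgames_def)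
    have rv': "\<rho> v' = (\<lambda>i. 1 * \<rho> v i + (-1) * \<rho> u i)"
      unfolding v'_def by (rule lin[OF less.prems u])
    have sub: "{S. \<exists>R\<subseteq>S. v' R \<noteq> 0} \<subseteq> {S. \<exists>R\<subseteq>S. v R \<noteq> 0}"
      by (auto simp: v'_def u_def split: if_splits)
    have Tin: "T \<in> {S. \<exists>R\<subseteq>S. v R \<noteq> 0}" using vT by auto
    have Tout: "T \<notin> {S. \<exists>R\<subseteq>S. v' R \<noteq> 0}"
    proof
      assume "T \<in> {S. \<exists>R\<subseteq>S. v' R \<noteq> 0}"
      then obtain R where R: "R \<subseteq> T" "v' R \<noteq> 0" by auto
      show False
      proof (cases "R = T")
        case True then show False using R by (simp add: v'_def u_def)
      next
        case False
        then have "R \<subset> T" using R by auto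
        then have "v R = 0" "\<not> T \<subseteq> R" using minT' by auto
        then show False using R by (simp add: v'_def u_def)
      qed
    qed
    have "card {S. \<exists>R\<subseteq>S. v' R \<noteq> 0} < card {S. \<exists>R\<subseteq>S. v R \<noteq> 0}"
    proof (rule psubset_card_mono)
      show "{S. \<exists>R\<subseteq>S. v' R \<noteq> 0} \<subset> {S. \<exists>R\<subseteq>S. v R \<noteq> 0}"
        using sub Tin Tout by blast
    qed simp
    then have IH: "\<rho> v' i = 0" for i using less.hyps v' by blast
    have dumT: "\<rho> u i = 0" if "i \<notin> T" for i
      by (rule dum[OF u]) (use that in \<open>auto simp: u_def\<close>)
    have symT: "\<rho> u i = \<rho> u j" if "i \<in> T" "j \<in> T" for i j
    proof (cases "i = j")
      case False
      show ?thesis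
        by (rule sym[OF u False]) (use that in \<open>auto simp: u_def\<close>)
    qed simp
    obtain t where t: "t \<in> T" using Tne by auto
    have "(\<Sum>i\<in>UNIV. \<rho> u i) = (\<Sum>i\<in>T. \<rho> u i)"
      by (rule sum.mono_neutral_right) (auto simp: dumT)
    also have "\<dots> = (\<Sum>i\<in>T. \<rho> u t)" by (rule sum.cong[OF refl]) (rule symT[OF _ t])
    also have "\<dots> = real (card T) * \<rho> u t" by simp
    finally have "real (card T) * \<rho> u t = 0" using eff[OF u] by simp
    moreover have "card T > 0" using Tne by (simp add: card_gt_0_iff)
    ultimately have "\<rho> u t = 0" using Tne by simp
    then have ru: "\<rho> u i = 0" for i
    proof (cases "i \<in> T")
      case True
      then show ?thesis using symT[OF True t] \<open>\<rho> u t = 0\<close> by simp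
    qed (rule dumT)
    show ?thesis using IH[of i] ru[of i] rv' by (metis mult_1 add.right_neutral mult_zero_right)
  qed
qed

theorem mainTheorem1:
  fixes \<Phi> :: "('n::finite set \<Rightarrow> real^'m::finite) \<Rightarrow> 'n \<Rightarrow> real^'m"
  assumes "vector_shapley_operator \<Phi>"
  shows "\<exists>\<phi> :: ('n set \<Rightarrow> real) \<Rightarrow> 'n \<Rightarrow> real.
           \<forall>v\<in>vgames. \<forall>i. \<Phi> v i = (\<chi> k. \<phi> (\<lambda>S. v S $ k) i)"
proof -
  note A = assms[unfolded vector_shapley_operator_def]
  have E: "\<And>v. v \<in> vgames \<Longrightarrow> (\<Sum>i\<in>UNIV. \<Phi> v i) = v UNIV" using A[THEN conjunct1] by blast
  have Sy: "\<And>v i j. v \<in> vgames \<Longrightarrow> i \<noteq> j \<Longrightarrow>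
        (\<forall>S. S \<subseteq> UNIV - {i, j} \<longrightarrow> v (insert i S) = v (insert j S)) \<Longrightarrow> \<Phi> v i = \<Phi> v j"
    using A[THEN conjunct2, THEN conjunct1] by blast
  have D: "\<And>v i. v \<in> vgames \<Longrightarrow>
        (\<forall>S. S \<subseteq> UNIV - {i} \<longrightarrow> v (insert i S) = v S) \<Longrightarrow> \<Phi> v i = 0" using A[THEN conjunct2, THEN conjunct2, THEN conjunct1] by blast
  have L: "\<And>v w \<alpha> \<beta>. v \<in> vgames \<Longrightarrow> w \<in> vgames \<Longrightarrow>
        \<Phi> (\<lambda>S. \<alpha> *\<^sub>R v S + \<beta> *\<^sub>R w S) = (\<lambda>i. \<alpha> *\<^sub>R \<Phi> v i + \<beta> *\<^sub>R \<Phi> w i)"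
    using A[THEN conjunct2, THEN conjunct2, THEN conjunct2] by blast
  define one :: "real^'m" where "one = (\<chi> k. 1)"
  define k0 :: 'm where "k0 = undefined"
  define \<phi> where "\<phi> = (\<lambda>(g :: 'n set \<Rightarrow> real) i. \<Phi> (\<lambda>S. g S *\<^sub>R one) i $ k0)"
  have main: "\<Phi> v i $ k = \<phi> (\<lambda>S. v S $ k) i" if v: "v \<in> vgames" for v i k
  proof -
    define Lk where "Lk = (\<lambda>(v :: 'n set \<Rightarrow> real^'m) S. (v S $ k) *\<^sub>R one)"
    have Lkg: "Lk v \<in> vgames" if "v \<in> vgames" for v
      using that by (simp add: Lk_def vgames_def)
    define \<rho> where "\<rho> = (\<lambda>v i. \<Phi> v i $ k - \<Phi> (Lk v) i $ k0)"
    have "\<rho> v i = 0"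
    proof (rule zero_operator[of \<rho>, OF _ _ _ _ v])
      fix v w :: "'n set \<Rightarrow> real^'m" and \<alpha> \<beta> :: real
      assume vw: "v \<in> vgames" "w \<in> vgames"
      have "Lk (\<lambda>S. \<alpha> *\<^sub>R v S + \<beta> *\<^sub>R w S) = (\<lambda>S. \<alpha> *\<^sub>R Lk v S + \<beta> *\<^sub>R Lk w S)"
        by (auto simp: Lk_def algebra_simps)
      then show "\<rho> (\<lambda>S. \<alpha> *\<^sub>R v S + \<beta> *\<^sub>R w S) = (\<lambda>i. \<alpha> * \<rho> v i + \<beta> * \<rho> w i)"
        unfolding \<rho>_def using L[OF vw] L[OF Lkg[OF vw(1)] Lkg[OF vw(2)]]
        by (auto simp: algebra_simps)
    next
      fix v :: "'n set \<Rightarrow> real^'m" and i j :: 'n assume vg: "v \<in> vgames" and ij: "i \<noteq> j"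
        and h: "\<forall>S. S \<subseteq> UNIV - {i, j} \<longrightarrow> v (insert i S) = v (insert j S)"
      have "\<Phi> v i = \<Phi> v j" by (rule Sy[OF vg ij h])
      moreover have "\<Phi> (Lk v) i = \<Phi> (Lk v) j"
        by (rule Sy[OF Lkg[OF vg] ij]) (use h in \<open>simp add: Lk_def\<close>)
      ultimately show "\<rho> v i = \<rho> v j" by (simp add: \<rho>_def)
    next
      fix v :: "'n set \<Rightarrow> real^'m" and i :: 'n assume vg: "v \<in> vgames"
        and h: "\<forall>S. S \<subseteq> UNIV - {i} \<longrightarrow> v (insert i S) = v S"
      have "\<Phi> v i = 0" by (rule D[OF vg h])
      moreover have "\<Phi> (Lk v) i = 0"
        by (rule D[OF Lkg[OF vg]]) (use h in \<open>simp add: Lk_def\<close>)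
      ultimately show "\<rho> v i = 0" by (simp add: \<rho>_def)
    next
      fix v :: "'n set \<Rightarrow> real^'m" assume vg: "v \<in> vgames"
      have "(\<Sum>i\<in>UNIV. \<rho> v i) = (\<Sum>i\<in>UNIV. \<Phi> v i) $ k - (\<Sum>i\<in>UNIV. \<Phi> (Lk v) i) $ k0"
        by (simp add: \<rho>_def sum_subtractf)
      also have "\<dots> = 0" using E[OF vg] E[OF Lkg[OF vg]] by (simp add: Lk_def one_def)
      finally show "(\<Sum>i\<in>UNIV. \<rho> v i) = 0" .
    qed
    then show ?thesis by (simp add: \<rho>_def \<phi>_def Lk_def)
  qed
  show ?thesis
    by (rule exI[of _ \<phi>]) (auto simp: main vec_eq_iff)
qed

end
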